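(* Let $q$ and $c$ be complex numbers with $|q|<1$ and $|cq|<1$. For each non-negative integer $m$ define \[ M_{m,c} = \sum_{n=1}^{\infty} n^m c^n q^n (q^{n+1};q)_\infty, \qquad K_{m+1,c} = \sum_{n=1}^{\infty} \sigma_{m,c}(n) q^n, \] where $\sigma_{m,c}(n) = \sum_{d\mid n} d^m c^d$. Then, as an identity of formal power series in $t$ (equivalently, for all complex $t$ in a neighbourhood of $0$), \[ \frac{(q;q)_\infty}{(cq;q)_\infty} \exp\Bigl(\sum_{m=1}^{\infty} K_{m,c} \frac{t^m}{m!}\Bigr) = \frac{(q;q)_\infty}{(cq;q)_\infty} + \sum_{m=1}^{\infty} M_{m,c} \frac{t^m}{m!}, \] and for every integer $m\ge 1$, \[ M_{m,c} = \frac{(q;q)_\infty}{(cq;q)_\infty}\, Y_m(K_{1,c}, K_{2,c}, \dots, K_{m,c}), \] where $Y_m$ is the Bell polynomial \[ Y_m(u_1,\dots,u_m) = \sum \frac{m!}{k_1!\cdots k_m!}\Bigl(\frac{u_1}{1!}\Bigr)^{k_1}\cdots \Bigl(\frac{u_m}{m!}\Bigr)^{k_m}, \] the sum being over all tuples $(k_1,\dots,k_m)$ of non-negative integers with $k_1 + 2k_2 + \cdots + m k_m = m$.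
   Context: For complex $a$ and $|q|<1$, $(a;q)_\infty = \prod_{j=0}^{\infty}(1-aq^j)$; thus $(q^{n+1};q)_\infty=\prod_{j\ge n+1}(1-q^j)$. The sum $\sum_{d\mid n}$ runs over positive divisors $d$ of $n$. *)

theory Defs
  imports "HOL-Analysis.Analysis" "HOL-Computational_Algebra.Formal_Power_Series"
begin

definition qpoch_inf :: "complex \<Rightarrow> complex \<Rightarrow> complex" where
  "qpoch_inf a q = (\<Prod>j. 1 - a * q ^ j)"

definition Mc :: "nat \<Rightarrow> complex \<Rightarrow> complex \<Rightarrow> complex" where
  "Mc m c q = (\<Sum>n. of_nat (Suc n) ^ m * c ^ Suc n * q ^ Suc n * qpoch_inf (q ^ (Suc n + 1)) q)"

definition sigma_c :: "nat \<Rightarrow> complex \<Rightarrow> nat \<Rightarrow> complex" where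
  "sigma_c m c n = (\<Sum>d\<in>{d. d dvd n}. of_nat d ^ m * c ^ d)"

text \<open>K_{m+1,c} = sum_{n>=1} sigma_{m,c}(n) q^n; so K_k c q uses sigma_{k-1,c}, for k >= 1.\<close>
definition Kc :: "nat \<Rightarrow> complex \<Rightarrow> complex \<Rightarrow> complex" where
  "Kc k c q = (\<Sum>n. sigma_c (k - 1) c (Suc n) * q ^ Suc n)"

definition bell_tuples :: "nat \<Rightarrow> (nat \<Rightarrow> nat) set" where
  "bell_tuples m = {k. (\<forall>i. i \<notin> {1..m} \<longrightarrow> k i = 0) \<and> (\<Sum>i=1..m. i * k i) = m}"

definition bellY :: "nat \<Rightarrow> (nat \<Rightarrow> complex) \<Rightarrow> complex" where
  "bellY m u = (\<Sum>k\<in>bell_tuples m.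
      fact m / (\<Prod>i=1..m. fact (k i)) * (\<Prod>i=1..m. (u i / fact i) ^ k i))"

end

theory Submission
  imports Defs "HOL-Complex_Analysis.Complex_Analysis"
begin


lemma exp_sum_fps:
  fixes a w :: "'i \<Rightarrow> complex" and r :: real
  assumes r: "r > 0" and S: "(\<lambda>i. norm (a i) * exp (norm (w i) * r)) summable_on I"
  shows "(\<lambda>t. \<Sum>\<^sub>\<infinity>i\<in>I. a i * exp (w i * t)) has_fps_expansion
           Abs_fps (\<lambda>m. (\<Sum>\<^sub>\<infinity>i\<in>I. a i * w i ^ m) / fact m)"
proof (rule has_fps_expansionI)
  have "eventually (\<lambda>t. t \<in> ball 0 r) (nhds (0::complex))"
    using r by (intro eventually_nhds_in_open) auto
  then show "eventually (\<lambda>t. (\<lambda>m. Abs_fps (\<lambda>m. (\<Sum>\<^sub>\<infinity>i\<in>I. a i * w i ^ m) / fact m) $ m * t ^ m)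
      sums (\<Sum>\<^sub>\<infinity>i\<in>I. a i * exp (w i * t))) (nhds 0)"
  proof eventually_elim
    case (elim t)
    hence t: "norm t < r" by simp
    define h where "h = (\<lambda>(i,m). a i * ((w i * t) ^ m / fact m))"
    have fib: "((\<lambda>m. h (i,m)) has_sum (a i * exp (w i * t))) UNIV" for i
    proof -
      have "(\<lambda>m. (w i * t) ^ m /\<^sub>R fact m) sums exp (w i * t)" by (rule exp_converges)
      moreover have "summable (\<lambda>m. norm ((w i * t) ^ m /\<^sub>R fact m))" by (rule summable_norm_exp)
      ultimately have "((\<lambda>m. (w i * t) ^ m /\<^sub>R fact m) has_sum exp (w i * t)) UNIV"
        by (intro norm_summable_imp_has_sum)
      hence "((\<lambda>m. a i * ((w i * t) ^ m /\<^sub>R fact m)) has_sum (a i * exp (w i * t))) UNIV"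
        by (rule has_sum_cmult_right)
      thus ?thesis by (simp add: h_def scaleR_conv_of_real divide_inverse mult_ac)
    qed
    have fibn: "((\<lambda>m. norm (h (i,m))) has_sum (norm (a i) * exp (norm (w i) * norm t))) UNIV" for i
    proof -
      have "(\<lambda>m. (norm (w i) * norm t) ^ m /\<^sub>R fact m) sums exp (norm (w i) * norm t)" by (rule exp_converges)
      moreover have "summable (\<lambda>m. norm ((norm (w i) * norm t) ^ m /\<^sub>R fact m))" by (rule summable_norm_exp)
      ultimately have "((\<lambda>m. (norm (w i) * norm t) ^ m /\<^sub>R fact m) has_sum exp (norm (w i) * norm t)) UNIV"
        by (intro norm_summable_imp_has_sum)
      hence "((\<lambda>m. norm (a i) * ((norm (w i) * norm t) ^ m /\<^sub>R fact m)) has_sum (norm (a i) * exp (norm (w i) * norm t))) UNIV"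
        by (rule has_sum_cmult_right)
      thus ?thesis by (simp add: h_def norm_mult norm_divide norm_power power_mult_distrib divide_inverse mult_ac norm_inverse norm_fact)
    qed
    have habs: "(\<lambda>x. norm (h x)) summable_on (I \<times> UNIV)"
    proof (subst Infinite_Sum.abs_summable_on_Sigma_iff, intro conjI ballI)
      fix i show "(\<lambda>m. norm (h (i, m))) summable_on UNIV" using fibn[of i] by (auto simp: summable_on_def)
    next
      have "\<And>i. (\<Sum>\<^sub>\<infinity>m\<in>UNIV. norm (h (i, m))) = norm (a i) * exp (norm (w i) * norm t)"
        using fibn by (auto intro: infsumI)
      moreover have "(\<lambda>i. norm (norm (a i) * exp (norm (w i) * norm t))) summable_on I"
      proof (rule Infinite_Sum.abs_summable_on_comparison_test)
        show "(\<lambda>i. norm (norm (a i) * exp (norm (w i) * r))) summable_on I"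
          using S by (simp add: abs_mult)
        fix i assume "i \<in> I"
        have "exp (norm (w i) * norm t) \<le> exp (norm (w i) * r)"
          using t by (auto intro: mult_left_mono)
        thus "norm (norm (a i) * exp (norm (w i) * norm t)) \<le> norm (norm (a i) * exp (norm (w i) * r))"
          by (auto intro: mult_left_mono)
      qed
      ultimately show "(\<lambda>i. norm (\<Sum>\<^sub>\<infinity>m\<in>UNIV. norm (h (i, m)))) summable_on I" by (simp add: abs_mult)
    qed
    hence hs: "h summable_on (I \<times> UNIV)" by (rule abs_summable_summable)
    have inner: "((\<lambda>i. h (i, m)) has_sum (Abs_fps (\<lambda>m. (\<Sum>\<^sub>\<infinity>i\<in>I. a i * w i ^ m) / fact m) $ m * t ^ m)) I" for m
    proof -
      have "(\<lambda>i. h (i, m)) summable_on I"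
        using hs summable_on_SigmaD1[of "\<lambda>m i. h (i,m)" UNIV "\<lambda>_. I" m] summable_on_swap[of h I UNIV]
        by (auto simp: case_prod_unfold)
      hence "((\<lambda>i. h (i, m)) has_sum infsum (\<lambda>i. h (i, m)) I) I" by simp
      moreover have eq: "(\<lambda>i. h (i, m)) = (\<lambda>i. (a i * w i ^ m) * (t ^ m / fact m))"
        by (auto simp: h_def power_mult_distrib)
      moreover have "infsum (\<lambda>i. (a i * w i ^ m) * (t ^ m / fact m)) I = (\<Sum>\<^sub>\<infinity>i\<in>I. a i * w i ^ m) * (t ^ m / fact m)"
        by (rule infsum_cmult_left')
      ultimately have "((\<lambda>i. h (i, m)) has_sum ((\<Sum>\<^sub>\<infinity>i\<in>I. a i * w i ^ m) * (t ^ m / fact m))) I"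
        by simp
      thus ?thesis by simp
    qed
    have "((\<lambda>m. Abs_fps (\<lambda>m. (\<Sum>\<^sub>\<infinity>i\<in>I. a i * w i ^ m) / fact m) $ m * t ^ m) has_sum
             (\<Sum>\<^sub>\<infinity>i\<in>I. a i * exp (w i * t))) UNIV"
    proof -
      have hs': "(\<lambda>(m,i). h (i,m)) summable_on (UNIV \<times> I)"
        using hs summable_on_swap by blast
      have "((\<lambda>m. infsum (\<lambda>i. h (i,m)) I) has_sum infsum (\<lambda>m. infsum (\<lambda>i. h (i,m)) I) UNIV) UNIV"
        using summable_on_Sigma_banach[OF hs'] by simp
      also have "infsum (\<lambda>m. infsum (\<lambda>i. h (i,m)) I) UNIV = infsum (\<lambda>i. infsum (\<lambda>m. h (i,m)) UNIV) I"
        using infsum_swap_banach[of "\<lambda>i m. h (i,m)" I UNIV] hs by (simp add: case_prod_unfold)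
      also have "\<dots> = (\<Sum>\<^sub>\<infinity>i\<in>I. a i * exp (w i * t))"
        by (rule infsum_cong) (use fib in \<open>auto intro: infsumI\<close>)
      finally have H: "((\<lambda>m. infsum (\<lambda>i. h (i,m)) I) has_sum (\<Sum>\<^sub>\<infinity>i\<in>I. a i * exp (w i * t))) UNIV" .
      have E: "infsum (\<lambda>i. h (i,m)) I = Abs_fps (\<lambda>m. (\<Sum>\<^sub>\<infinity>i\<in>I. a i * w i ^ m) / fact m) $ m * t ^ m" for m
        using inner[of m] by (rule infsumI)
      show ?thesis using H by (simp only: E)
    qed
    thus ?case by (rule has_sum_imp_sums)
  qed
qed


lemma qp_conv:
  fixes a q :: complex assumes "norm q < 1"
  shows "convergent_prod (\<lambda>j. 1 - a * q ^ j)"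
proof (rule abs_convergent_prod_imp_convergent_prod, rule summable_imp_abs_convergent_prod)
  have "summable (\<lambda>i. norm a * norm q ^ i)"
    using assms by (intro summable_mult summable_geometric) auto
  thus "summable (\<lambda>i. norm (1 - a * q ^ i - 1))" by (simp add: norm_mult norm_power)
qed

lemma qp_lim:
  fixes a q :: complex assumes "norm q < 1"
  shows "(\<lambda>n. \<Prod>j<n. 1 - a * q ^ j) \<longlonglongrightarrow> qpoch_inf a q"
proof -
  have "(\<lambda>n. \<Prod>j\<le>n. 1 - a * q ^ j) \<longlonglongrightarrow> qpoch_inf a q"
    unfolding qpoch_inf_def by (rule convergent_prod_LIMSEQ[OF qp_conv[OF assms]])
  hence "(\<lambda>n. \<Prod>j<Suc n. 1 - a * q ^ j) \<longlonglongrightarrow> qpoch_inf a q"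
    by (simp add: lessThan_Suc_atMost)
  thus ?thesis by (rule LIMSEQ_imp_Suc)
qed

lemma qp_shift:
  fixes a q :: complex assumes "norm q < 1"
  shows "qpoch_inf a q = (1 - a) * qpoch_inf (a * q) q"
proof -
  have "(\<lambda>n. \<Prod>j<Suc n. 1 - a * q ^ j) \<longlonglongrightarrow> qpoch_inf a q"
    using qp_lim[OF assms] by (rule LIMSEQ_Suc)
  moreover have "(\<lambda>n. \<Prod>j<Suc n. 1 - a * q ^ j) = (\<lambda>n. (1 - a) * (\<Prod>j<n. 1 - (a * q) * q ^ j))"
    unfolding prod.lessThan_Suc_shift by (simp add: mult_ac)
  moreover have "(\<lambda>n. (1 - a) * (\<Prod>j<n. 1 - (a * q) * q ^ j)) \<longlonglongrightarrow> (1 - a) * qpoch_inf (a * q) q"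
    by (intro tendsto_mult tendsto_const qp_lim assms)
  ultimately show ?thesis using LIMSEQ_unique by metis
qed

lemma qp_nz:
  fixes a q :: complex assumes "norm q < 1" "\<And>j. a * q ^ j \<noteq> 1"
  shows "qpoch_inf a q \<noteq> 0"
  unfolding qpoch_inf_def using assms by (intro prodinf_nonzero qp_conv) auto

lemma qp_bound:
  fixes a q :: complex assumes "norm q < 1" "norm a \<le> 1"
  shows "norm (qpoch_inf a q) \<le> exp (1 / (1 - norm q))"
proof (rule Lim_norm_ubound[OF _ qp_lim[OF assms(1)]])
  show "sequentially \<noteq> bot" by simp
  show "\<forall>\<^sub>F n in sequentially. norm (\<Prod>j<n. 1 - a * q ^ j) \<le> exp (1 / (1 - norm q))"
  proof (intro always_eventually allI)
    fix n
    have "norm (\<Prod>j<n. 1 - a * q ^ j) \<le> (\<Prod>j<n. norm (1 - a * q ^ j))"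
      by (simp add: prod_norm)
    also have "\<dots> \<le> (\<Prod>j<n. exp (norm q ^ j))"
    proof (rule prod_mono, safe)
      fix j
      have "norm (1 - a * q ^ j) \<le> 1 + norm a * norm q ^ j"
        by (metis norm_triangle_ineq4 norm_one norm_mult norm_power)
      also have "\<dots> \<le> 1 + norm q ^ j"
        using assms by (auto intro: mult_left_le_one_le)
      also have "\<dots> \<le> exp (norm q ^ j)" by (rule exp_ge_add_one_self)
      finally show "norm (1 - a * q ^ j) \<le> exp (norm q ^ j)" .
    qed simp
    also have "\<dots> = exp (\<Sum>j<n. norm q ^ j)" by (simp add: exp_sum)
    also have "\<dots> \<le> exp (1 / (1 - norm q))"
    proof -
      have "(\<Sum>j<n. norm q ^ j) \<le> (\<Sum>j. norm q ^ j)"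
        using assms by (intro sum_le_suminf summable_geometric) auto
      also have "\<dots> = 1 / (1 - norm q)" using assms by (simp add: suminf_geometric)
      finally show ?thesis by simp
    qed
    finally show "norm (\<Prod>j<n. 1 - a * q ^ j) \<le> exp (1 / (1 - norm q))" .
  qed
qed


definition EF :: "complex \<Rightarrow> complex fps" where
  "EF q = Abs_fps (\<lambda>n. qpoch_inf (q ^ Suc n) q)"

lemma EF_summable:
  fixes q z :: complex assumes q: "norm q < 1" and z: "norm z < 1"
  shows "summable (\<lambda>n. qpoch_inf (q ^ Suc n) q * z ^ n)"
proof (rule summable_comparison_test')
  show "summable (\<lambda>n. exp (1 / (1 - norm q)) * norm z ^ n)"
    using z by (intro summable_mult summable_geometric) auto
  fix n :: nat
  have "norm (q ^ Suc n) \<le> 1" unfolding norm_power using q by (intro power_le_one) auto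
  hence "norm (qpoch_inf (q ^ Suc n) q) \<le> exp (1 / (1 - norm q))" by (rule qp_bound[OF q])
  thus "norm (qpoch_inf (q ^ Suc n) q * z ^ n) \<le> exp (1 / (1 - norm q)) * norm z ^ n"
    by (simp add: norm_mult norm_power mult_right_mono)
qed

lemma EF_radius:
  fixes q :: complex assumes q: "norm q < 1"
  shows "fps_conv_radius (EF q) > 0"
proof -
  have "summable (\<lambda>n. fps_nth (EF q) n * (1/2 :: complex) ^ n)"
    using EF_summable[OF q, of "1/2"] by (simp add: EF_def)
  hence "fps_conv_radius (EF q) \<ge> norm (1/2 :: complex)"
    unfolding fps_conv_radius_def by (rule conv_radius_geI)
  thus ?thesis by (rule less_le_trans[rotated]) (simp add: zero_ereal_def)
qed

lemma EF_func:
  fixes q z :: complex assumes q: "norm q < 1" and z: "norm z < 1"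
  shows "eval_fps (EF q) (z * q) = (1 - z) * eval_fps (EF q) z"
proof -
  let ?P = "\<lambda>n. qpoch_inf (q ^ n) q"
  have s1: "summable (\<lambda>n. ?P (Suc n) * z ^ n)" by (rule EF_summable[OF q z])
  have zq: "norm (z * q) < 1" 
  proof -
    have "norm z * norm q \<le> norm z" using q by (intro mult_right_le_one_le) auto
    thus ?thesis using z by (simp add: norm_mult)
  qed
  have s2: "summable (\<lambda>n. ?P (Suc n) * (z * q) ^ n)" by (rule EF_summable[OF q zq])
  have "eval_fps (EF q) z - eval_fps (EF q) (z * q) = (\<Sum>n. ?P (Suc n) * z ^ n - ?P (Suc n) * (z * q) ^ n)"
    unfolding eval_fps_def EF_def using s1 s2 by (simp add: suminf_diff)
  also have "\<dots> = (\<Sum>n. ?P n * z ^ n)"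
  proof (rule suminf_cong)
    fix n
    have eq: "?P n = (1 - q ^ n) * ?P (Suc n)"
      using qp_shift[OF q, of "q ^ n"] by (simp add: power_Suc2 mult.commute)
    show "?P (Suc n) * z ^ n - ?P (Suc n) * (z * q) ^ n = ?P n * z ^ n"
      by (simp only: eq) (simp add: power_mult_distrib algebra_simps)
  qed
  also have "\<dots> = z * eval_fps (EF q) z"
  proof -
    have P0: "?P 0 = 0" using qp_shift[OF q, of 1] by simp
    have "(\<lambda>n. ?P (Suc n) * z ^ Suc n) sums (z * eval_fps (EF q) z)"
      using sums_mult[OF summable_sums[OF s1], of z] unfolding eval_fps_def EF_def
      by (simp add: mult_ac)
    hence "(\<lambda>n. ?P n * z ^ n) sums (z * eval_fps (EF q) z)"
      using sums_Suc_iff[of "\<lambda>n. ?P n * z ^ n"] P0 by simp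
    thus ?thesis by (rule sums_unique[symmetric])
  qed
  finally show ?thesis by (simp add: algebra_simps)
qed

lemma euler:
  fixes q x :: complex assumes q: "norm q < 1" and x: "norm x < 1"
  shows "qpoch_inf x q * eval_fps (EF q) x = qpoch_inf q q"
proof -
  have nx: "norm (x * q ^ N) < 1" for N
  proof -
    have "norm q ^ N \<le> 1" using q by (intro power_le_one) auto
    hence "norm x * norm q ^ N \<le> norm x" by (intro mult_right_le_one_le) auto
    thus ?thesis using x by (simp add: norm_mult norm_power)
  qed
  have ind: "eval_fps (EF q) (x * q ^ N) = (\<Prod>j<N. 1 - x * q ^ j) * eval_fps (EF q) x" for N
  proof (induction N)
    case (Suc N)
    have "eval_fps (EF q) (x * q ^ Suc N) = eval_fps (EF q) ((x * q ^ N) * q)" by (simp add: mult_ac)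
    also have "\<dots> = (1 - x * q ^ N) * eval_fps (EF q) (x * q ^ N)" by (rule EF_func[OF q nx])
    finally show ?case using Suc by (simp add: mult_ac)
  qed simp
  have "(\<lambda>N. x * q ^ N) \<longlonglongrightarrow> 0"
    using tendsto_mult[OF tendsto_const LIMSEQ_power_zero[of q], of x] q by simp
  moreover have "isCont (eval_fps (EF q)) 0"
    using EF_radius[OF q] by (intro continuous_eval_fps) (simp add: zero_ereal_def)
  ultimately have "(\<lambda>N. eval_fps (EF q) (x * q ^ N)) \<longlonglongrightarrow> eval_fps (EF q) 0"
    by (rule isCont_tendsto_compose[rotated])
  moreover have "(\<lambda>N. eval_fps (EF q) (x * q ^ N)) \<longlonglongrightarrow> qpoch_inf x q * eval_fps (EF q) x"
    unfolding ind by (intro tendsto_mult tendsto_const qp_lim q)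
  ultimately have "qpoch_inf x q * eval_fps (EF q) x = eval_fps (EF q) 0"
    using LIMSEQ_unique by metis
  thus ?thesis by (simp add: eval_fps_at_0 EF_def)
qed


lemma pow_div_fact_le_exp:
  fixes x :: real assumes "x \<ge> 0"
  shows "x ^ m / fact m \<le> exp x"
proof -
  have "(\<lambda>n. x ^ n / fact n) sums exp x"
    using exp_converges[of x] by (simp add: divide_inverse mult.commute)
  hence "sum (\<lambda>n. x ^ n / fact n) {m} \<le> exp x"
    using assms by (intro sum_le_suminf[of "\<lambda>n. x ^ n / fact n", THEN order.trans]) (auto simp: sums_iff)
  thus ?thesis by simp
qed

lemma pw_summable:
  fixes a w :: "'i \<Rightarrow> complex" and r :: real
  assumes r: "r > 0" and S: "(\<lambda>i. norm (a i) * exp (norm (w i) * r)) summable_on I"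
  shows "(\<lambda>i. a i * w i ^ m) summable_on I"
proof -
  have "(\<lambda>i. norm (a i * w i ^ m)) summable_on I"
  proof (rule Infinite_Sum.abs_summable_on_comparison_test)
    show "(\<lambda>i. norm (fact m / r ^ m * (norm (a i) * exp (norm (w i) * r)))) summable_on I"
      using summable_on_cmult_right[OF S, of "fact m / r ^ m"] r by (simp add: abs_mult)
    fix i assume "i \<in> I"
    have "(norm (w i) * r) ^ m / fact m \<le> exp (norm (w i) * r)"
      using r by (intro pow_div_fact_le_exp) auto
    hence "norm (w i) ^ m \<le> fact m / r ^ m * exp (norm (w i) * r)"
      using r by (simp add: field_simps power_mult_distrib)
    hence "norm (a i) * norm (w i) ^ m \<le> norm (a i) * (fact m / r ^ m * exp (norm (w i) * r))"
      by (rule mult_left_mono) auto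
    thus "norm (a i * w i ^ m) \<le> norm (fact m / r ^ m * (norm (a i) * exp (norm (w i) * r)))"
      using r by (simp add: norm_mult norm_power abs_mult mult_ac)
  qed
  thus ?thesis by (simp add: summable_on_iff_abs_summable_on_complex)
qed

lemma geom_prod_summable:
  fixes x y :: real assumes "0 \<le> x" "x < 1" "0 \<le> y" "y < 1"
  shows "(\<lambda>(j,d). x ^ j * y ^ d) summable_on (UNIV \<times> UNIV)"
proof (rule summable_on_SigmaI[where g = "\<lambda>j. x ^ j * (1 / (1 - y))"])
  fix j :: nat
  have "(\<lambda>d. y ^ d) sums (1 / (1 - y))" using assms by (intro geometric_sums) auto
  hence "((\<lambda>d. y ^ d) has_sum (1 / (1 - y))) UNIV"
    using assms by (intro norm_summable_imp_has_sum) (auto intro: summable_geometric)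
  thus "((\<lambda>d. (\<lambda>(j,d). x ^ j * y ^ d) (j, d)) has_sum x ^ j * (1 / (1 - y))) UNIV"
    using has_sum_cmult_right[of "\<lambda>d. y ^ d" UNIV "1 / (1 - y)" "x ^ j"] by simp
next
  have "summable (\<lambda>j. x ^ j)" using assms by (intro summable_geometric) auto
  hence "(\<lambda>j. x ^ j) summable_on UNIV"
    using assms by (intro norm_summable_imp_summable_on) auto
  thus "(\<lambda>j. x ^ j * (1 / (1 - y))) summable_on UNIV" by (rule summable_on_cmult_left)
qed (use assms in auto)


lemma exp_summable:
  fixes a w :: "'i \<Rightarrow> complex" and r :: real
  assumes S: "(\<lambda>i. norm (a i) * exp (norm (w i) * r)) summable_on I" and t: "norm t \<le> r"
  shows "(\<lambda>i. a i * exp (w i * t)) summable_on I"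
proof -
  have "(\<lambda>i. norm (a i * exp (w i * t))) summable_on I"
  proof (rule Infinite_Sum.abs_summable_on_comparison_test)
    show "(\<lambda>i. norm (norm (a i) * exp (norm (w i) * r))) summable_on I"
      using S by (simp add: abs_mult)
    fix i assume "i \<in> I"
    have "norm (exp (w i * t)) \<le> exp (norm (w i * t))" by (rule norm_exp)
    also have "\<dots> \<le> exp (norm (w i) * r)"
      using t by (auto simp: norm_mult intro: mult_left_mono)
    finally show "norm (a i * exp (w i * t)) \<le> norm (norm (a i) * exp (norm (w i) * r))"
      by (simp add: norm_mult abs_mult mult_left_mono)
  qed
  thus ?thesis by (simp add: summable_on_iff_abs_summable_on_complex)
qed

lemma div_le_self_real:
  fixes x y :: real assumes "0 \<le> x" "1 \<le> y" shows "x / y \<le> x"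
  using assms mult_left_mono[of 1 y x] by (simp add: divide_le_eq)

lemma ln_has_sum:
  fixes v :: complex assumes "norm v < 1"
  shows "((\<lambda>d. v ^ Suc d / of_nat (Suc d)) has_sum (- ln (1 - v))) UNIV"
proof -
  have "(\<lambda>n. - ((-(-v))^n) / of_nat n) sums ln (1 + (-v))"
    using assms by (intro Ln_series') auto
  hence "(\<lambda>n. - (v ^ n / of_nat n)) sums ln (1 - v)" by simp
  hence "(\<lambda>n. v ^ n / of_nat n) sums (- ln (1 - v))"
    using sums_minus by fastforce
  hence sm: "(\<lambda>d. v ^ Suc d / of_nat (Suc d)) sums (- ln (1 - v))"
    using sums_Suc_iff[of "\<lambda>n. v ^ n / of_nat n"] by simp
  have "summable (\<lambda>d. norm (v ^ Suc d / of_nat (Suc d)))"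
  proof (rule summable_comparison_test')
    show "summable (\<lambda>d. norm v ^ Suc d)" using assms by (intro summable_geometric summable_Suc_iff[THEN iffD2]) auto
    fix d :: nat
    have "norm v ^ Suc d / real (Suc d) \<le> norm v ^ Suc d"
      by (rule div_le_self_real) auto
    thus "norm (norm (v ^ Suc d / of_nat (Suc d))) \<le> norm v ^ Suc d"
      by (simp add: norm_divide norm_power norm_mult norm_of_nat del: of_nat_Suc)
  qed
  thus ?thesis using sm by (rule norm_summable_imp_has_sum)
qed

definition aG :: "complex \<Rightarrow> complex \<Rightarrow> nat \<times> nat \<Rightarrow> complex" where
  "aG c q = (\<lambda>(j,d). (c * q ^ Suc j) ^ Suc d / of_nat (Suc d))"

definition wG :: "nat \<times> nat \<Rightarrow> complex" where
  "wG = (\<lambda>(j,d). of_nat (Suc d))"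

lemma aG_summable:
  fixes c q :: complex and r :: real
  assumes q: "norm q < 1" and s: "norm (c * q) * exp r < 1"
  shows "(\<lambda>i. norm (aG c q i) * exp (norm (wG i) * r)) summable_on UNIV"
proof -
  define \<rho> where "\<rho> = norm (c * q)"
  define s where "s = \<rho> * exp r"
  have s0: "0 \<le> s" "s < 1" using s by (auto simp: s_def \<rho>_def)
  have "(\<lambda>(j,d). norm q ^ j * s ^ d) summable_on (UNIV \<times> UNIV)"
    using q s0 by (intro geom_prod_summable) auto
  hence G: "(\<lambda>i. s * (\<lambda>(j,d). norm q ^ j * s ^ d) i) summable_on (UNIV \<times> UNIV)"
    by (rule summable_on_cmult_right)
  have "(\<lambda>i. norm (norm (aG c q i) * exp (norm (wG i) * r))) summable_on UNIV"
  proof (rule Infinite_Sum.abs_summable_on_comparison_test)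
    show "(\<lambda>i. norm (s * (\<lambda>(j,d). norm q ^ j * s ^ d) i)) summable_on UNIV"
      using G s0 by (simp add: abs_mult case_prod_unfold)
    fix i :: "nat \<times> nat"
    obtain j d where i: "i = (j, d)" by (cases i)
    have nu: "norm (c * q ^ Suc j) = \<rho> * norm q ^ j"
      by (simp add: \<rho>_def norm_mult norm_power mult_ac)
    have qj: "norm q ^ j \<le> 1" using q by (intro power_le_one) auto
    have "norm (aG c q i) = (\<rho> * norm q ^ j) ^ Suc d / real (Suc d)"
      unfolding i aG_def using nu by (simp add: norm_divide norm_power norm_of_nat del: power_Suc of_nat_Suc)
    also have "\<dots> \<le> (\<rho> * norm q ^ j) ^ Suc d" by (rule div_le_self_real) (auto simp: \<rho>_def)
    finally have "norm (aG c q i) \<le> (\<rho> * norm q ^ j) ^ Suc d" .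
    hence "norm (aG c q i) * exp (norm (wG i) * r) \<le> (\<rho> * norm q ^ j) ^ Suc d * exp (real (Suc d) * r)"
    proof -
      have "norm (wG i) = real (Suc d)" by (simp add: i wG_def norm_of_nat del: of_nat_Suc)
      thus ?thesis using \<open>norm (aG c q i) \<le> _\<close> by (simp add: mult_right_mono)
    qed
    also have "\<dots> = s ^ Suc d * (norm q ^ j) ^ Suc d"
      using exp_of_nat_mult[of "Suc d" r] by (simp only: s_def power_mult_distrib mult_ac)
    also have "\<dots> \<le> s ^ Suc d * norm q ^ j"
    proof (rule mult_left_mono)
      have "(norm q ^ j) ^ Suc d = norm q ^ j * (norm q ^ j) ^ d" by simp
      also have "\<dots> \<le> norm q ^ j * 1" using qj q by (intro mult_left_mono power_le_one) auto
      finally show "(norm q ^ j) ^ Suc d \<le> norm q ^ j" by simp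
    qed (use s0 in auto)
    finally show "norm (norm (aG c q i) * exp (norm (wG i) * r)) \<le> norm (s * (\<lambda>(j,d). norm q ^ j * s ^ d) i)"
      using s0 by (simp add: i abs_mult mult_ac)
  qed
  thus ?thesis by (simp add: abs_mult)
qed


definition Gf :: "complex \<Rightarrow> complex \<Rightarrow> complex \<Rightarrow> complex" where
  "Gf c q t = (\<Sum>\<^sub>\<infinity>i. aG c q i * exp (wG i * t)) - (\<Sum>\<^sub>\<infinity>i. aG c q i)"

lemma G_prod:
  fixes c q t :: complex and r :: real
  assumes q: "norm q < 1" and s: "norm (c * q) * exp r < 1" and t: "norm t < r"
  shows "qpoch_inf (c * q * exp t) q * exp (Gf c q t) = qpoch_inf (c * q) q"
proof -
  have r: "r > 0" using t norm_ge_zero[of t] by linarith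
  note S = aG_summable[OF q s]
  have sa: "aG c q summable_on UNIV" using pw_summable[OF r S, of 0] by simp
  have sb: "(\<lambda>i. aG c q i * exp (wG i * t)) summable_on UNIV"
    using exp_summable[OF S, of t] t by simp
  define u where "u = (\<lambda>j. c * q * q ^ j)"
  define v where "v = (\<lambda>j. c * q * exp t * q ^ j)"
  have \<rho>1: "norm (c * q) < 1"
  proof -
    have "norm (c * q) * 1 \<le> norm (c * q) * exp r" using r by (intro mult_left_mono) auto
    thus ?thesis using s by simp
  qed
  have qj: "norm q ^ j \<le> 1" for j using q by (intro power_le_one) auto
  have nu: "norm (u j) < 1" for j
  proof -
    have "norm (c * q) * norm q ^ j \<le> norm (c * q)" using qj[of j] by (intro mult_right_le_one_le) auto
    thus ?thesis using \<rho>1 by (simp add: u_def norm_mult norm_power)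
  qed
  have nv: "norm (v j) < 1" for j
  proof -
    have e: "norm (exp t) \<le> exp r"
      using norm_exp[of t] t by (meson exp_le_cancel_iff less_imp_le order.trans)
    have "norm (v j) = norm (c * q) * norm (exp t) * norm q ^ j" by (simp add: v_def norm_mult norm_power)
    also have "\<dots> \<le> norm (c * q) * exp r * 1"
      using e qj[of j] by (intro mult_mono mult_left_mono) auto
    finally show ?thesis using s by simp
  qed
  have hD: "((\<lambda>i. aG c q i * exp (wG i * t) + - aG c q i) has_sum Gf c q t) (UNIV \<times> UNIV)"
    unfolding Gf_def using has_sum_add[OF has_sum_infsum[OF sb] has_sum_uminusI[OF has_sum_infsum[OF sa]]]
    by simp
  have fib: "((\<lambda>d. aG c q (j, d) * exp (wG (j, d) * t) + - aG c q (j, d)) has_sum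
               (- ln (1 - v j) + - (- ln (1 - u j)))) UNIV" for j
  proof -
    have "((\<lambda>d. v j ^ Suc d / of_nat (Suc d) + - (u j ^ Suc d / of_nat (Suc d))) has_sum
               (- ln (1 - v j) + - (- ln (1 - u j)))) UNIV"
      by (intro has_sum_add ln_has_sum nu nv has_sum_uminusI)
    moreover have "v j ^ Suc d / of_nat (Suc d) + - (u j ^ Suc d / of_nat (Suc d)) =
                   aG c q (j, d) * exp (wG (j, d) * t) + - aG c q (j, d)" for d
    proof -
      have "exp (wG (j, d) * t) = exp t ^ Suc d" unfolding wG_def by (simp only: case_prod_conv exp_of_nat_mult)
      moreover have "v j = u j * exp t" by (simp add: u_def v_def mult_ac)
      moreover have "u j = c * q ^ Suc j" by (simp add: u_def mult_ac)
      ultimately show ?thesis by (simp add: aG_def power_mult_distrib)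
    qed
    ultimately show ?thesis by simp
  qed
  have "((\<lambda>j. - ln (1 - v j) + - (- ln (1 - u j))) has_sum Gf c q t) UNIV"
    by (rule has_sum_Sigma'[OF hD fib])
  hence "(\<lambda>j. - ln (1 - v j) + - (- ln (1 - u j))) sums Gf c q t" by (rule has_sum_imp_sums)
  hence "(\<lambda>n. \<Sum>j<n. - ln (1 - v j) + - (- ln (1 - u j))) \<longlonglongrightarrow> Gf c q t" by (simp add: sums_def)
  hence "(\<lambda>n. exp (\<Sum>j<n. - ln (1 - v j) + - (- ln (1 - u j)))) \<longlonglongrightarrow> exp (Gf c q t)"
    by (rule tendsto_exp)
  hence L1: "(\<lambda>n. (\<Prod>j<n. 1 - v j) * exp (\<Sum>j<n. - ln (1 - v j) + - (- ln (1 - u j))))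
            \<longlonglongrightarrow> qpoch_inf (c * q * exp t) q * exp (Gf c q t)"
    unfolding v_def by (intro tendsto_mult qp_lim q)
  have "(\<Prod>j<n. 1 - v j) * exp (\<Sum>j<n. - ln (1 - v j) + - (- ln (1 - u j))) = (\<Prod>j<n. 1 - u j)" for n
  proof -
    have nz: "1 - v j \<noteq> 0" "1 - u j \<noteq> 0" for j
      using nu[of j] nv[of j] by (auto simp: right_minus_eq) 
    have "(\<Prod>j<n. 1 - v j) * exp (\<Sum>j<n. - ln (1 - v j) + - (- ln (1 - u j)))
          = (\<Prod>j<n. (1 - v j) * exp (- ln (1 - v j) + - (- ln (1 - u j))))"
      by (simp add: exp_sum prod.distrib)
    also have "\<dots> = (\<Prod>j<n. 1 - u j)"
    proof (rule prod.cong)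
      fix j
      have "- ln (1 - v j) + - (- ln (1 - u j)) = ln (1 - u j) - ln (1 - v j)" by simp
      hence "exp (- ln (1 - v j) + - (- ln (1 - u j))) = exp (ln (1 - u j)) / exp (ln (1 - v j))"
        by (simp only: exp_diff)
      also have "\<dots> = (1 - u j) / (1 - v j)" using exp_Ln[OF nz(2)[of j]] exp_Ln[OF nz(1)[of j]] by (simp only:)
      finally have "exp (- ln (1 - v j) + - (- ln (1 - u j))) = (1 - u j) / (1 - v j)" .
      thus "(1 - v j) * exp (- ln (1 - v j) + - (- ln (1 - u j))) = 1 - u j"
        using nz[of j] by simp
    qed simp
    finally show ?thesis .
  qed
  hence "(\<lambda>n. (\<Prod>j<n. 1 - v j) * exp (\<Sum>j<n. - ln (1 - v j) + - (- ln (1 - u j))))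
            \<longlonglongrightarrow> qpoch_inf (c * q) q"
    unfolding u_def by (simp only: qp_lim[OF q])
  from LIMSEQ_unique[OF L1 this] show ?thesis .
qed


lemma aux_div: fixes D X :: complex shows "D \<noteq> 0 \<Longrightarrow> X / D * (D * D ^ k) = D ^ k * X"
  by (simp add: field_simps)

lemma K_eq:
  fixes c q :: complex and r :: real
  assumes q: "norm q < 1" and s: "norm (c * q) * exp r < 1" and r: "r > 0" and m: "m \<ge> 1"
  shows "infsum (\<lambda>i. aG c q i * wG i ^ m) UNIV = Kc m c q"
proof -
  obtain k where k: "m = Suc k" using m by (cases m) auto
  define V where "V = infsum (\<lambda>i. aG c q i * wG i ^ m) UNIV"
  have hs: "((\<lambda>i. aG c q i * wG i ^ m) has_sum V) UNIV"
    unfolding V_def using pw_summable[OF r aG_summable[OF q s], of m] by simp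
  define f where "f = (\<lambda>(n,e). of_nat e ^ k * c ^ e * q ^ Suc n)"
  define T where "T = Sigma (UNIV :: nat set) (\<lambda>n. {e. e dvd Suc n})"
  have "((\<lambda>i. aG c q i * wG i ^ m) has_sum V) UNIV = (f has_sum V) T"
  proof (rule has_sum_reindex_bij_witness[where j = "\<lambda>(a,d). (Suc a * Suc d - 1, Suc d)"
                                            and i = "\<lambda>(n,e). (Suc n div e - 1, e - 1)"])
    fix x :: "nat \<times> nat" assume "x \<in> UNIV"
    obtain a d where x: "x = (a, d)" by (cases x)
    have pos: "Suc (Suc a * Suc d - 1) = Suc a * Suc d" by simp
    show "(\<lambda>(n,e). (Suc n div e - 1, e - 1)) ((\<lambda>(a,d). (Suc a * Suc d - 1, Suc d)) x) = x"
      unfolding x using pos by (simp del: mult_Suc mult_Suc_right)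
    show "(\<lambda>(a,d). (Suc a * Suc d - 1, Suc d)) x \<in> T"
      unfolding x T_def using pos by (simp del: mult_Suc mult_Suc_right)
    have "f ((\<lambda>(a,d). (Suc a * Suc d - 1, Suc d)) x) = of_nat (Suc d) ^ k * c ^ Suc d * q ^ (Suc a * Suc d)"
      unfolding x f_def by (simp only: case_prod_conv pos)
    also have "\<dots> = aG c q x * wG x ^ m"
    proof -
      have e1: "(c * q ^ Suc a) ^ Suc d = c ^ Suc d * q ^ (Suc a * Suc d)"
        by (simp only: power_mult_distrib power_mult)
      have D: "(of_nat (Suc d) :: complex) \<noteq> 0" by (simp only: of_nat_eq_0_iff)
      have e2: "X / of_nat (Suc d) * of_nat (Suc d) ^ Suc k = (of_nat (Suc d) :: complex) ^ k * X" for X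
        unfolding power_Suc by (rule aux_div[OF D])
      show ?thesis unfolding x aG_def wG_def k case_prod_conv e1 e2 by (simp only: mult_ac)
    qed
    finally show "f ((\<lambda>(a,d). (Suc a * Suc d - 1, Suc d)) x) = aG c q x * wG x ^ m" .
  next
    fix y assume "y \<in> T"
    then obtain n e where y: "y = (n, e)" and e: "e dvd Suc n" unfolding T_def by auto
    have e0: "e \<ge> 1" using e by (cases e) auto
    obtain l where l: "Suc n = e * l" using e by (auto elim: dvdE)
    have l0: "l \<ge> 1" using l by (cases l) auto
    have "Suc n div e = l" using l e0 by simp
    thus "(\<lambda>(a,d). (Suc a * Suc d - 1, Suc d)) ((\<lambda>(n,e). (Suc n div e - 1, e - 1)) y) = y"
      unfolding y using l l0 e0 by (simp add: Suc_pred' mult.commute del: mult_Suc mult_Suc_right)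
  qed auto
  with hs have hf: "(f has_sum V) T" by simp
  have fib: "((\<lambda>e. f (n, e)) has_sum (sigma_c (m - 1) c (Suc n) * q ^ Suc n)) {e. e dvd Suc n}" for n
  proof (rule has_sum_finiteI)
    show "finite {e. e dvd Suc n}" by (rule finite_divisors_nat) simp
    show "sigma_c (m - 1) c (Suc n) * q ^ Suc n = sum (\<lambda>e. f (n, e)) {e. e dvd Suc n}"
      unfolding sigma_c_def f_def k by (simp add: sum_distrib_right)
  qed
  have "((\<lambda>n. sigma_c (m - 1) c (Suc n) * q ^ Suc n) has_sum V) UNIV"
    by (rule has_sum_Sigma'[OF hf[unfolded T_def] fib])
  hence "(\<lambda>n. sigma_c (m - 1) c (Suc n) * q ^ Suc n) sums V" by (rule has_sum_imp_sums)
  thus ?thesis unfolding Kc_def V_def by (simp add: sums_iff)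
qed


definition aM :: "complex \<Rightarrow> complex \<Rightarrow> nat \<Rightarrow> complex" where
  "aM c q n = (c * q) ^ n * qpoch_inf (q ^ Suc n) q"

definition wM :: "nat \<Rightarrow> complex" where
  "wM n = of_nat n"

lemma infsum_sums: "f summable_on (UNIV :: nat set) \<Longrightarrow> f sums infsum f UNIV"
  by (rule has_sum_imp_sums) simp

lemma aM_summable:
  fixes c q :: complex and r :: real
  assumes q: "norm q < 1" and s: "norm (c * q) * exp r < 1"
  shows "(\<lambda>n. norm (aM c q n) * exp (norm (wM n) * r)) summable_on UNIV"
proof -
  define B where "B = exp (1 / (1 - norm q))"
  define s where "s = norm (c * q) * exp r"
  have s0: "0 \<le> s" "s < 1" using s by (auto simp: s_def)
  have "summable (\<lambda>n. norm (aM c q n) * exp (norm (wM n) * r))"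
  proof (rule summable_comparison_test')
    show "summable (\<lambda>n. B * s ^ n)" using s0 by (intro summable_mult summable_geometric) auto
    fix n :: nat
    have "norm (q ^ Suc n) \<le> 1" unfolding norm_power using q by (intro power_le_one) auto
    hence P: "norm (qpoch_inf (q ^ Suc n) q) \<le> B" unfolding B_def by (rule qp_bound[OF q])
    have "norm (aM c q n) * exp (norm (wM n) * r) = norm (qpoch_inf (q ^ Suc n) q) * s ^ n"
      by (simp add: aM_def wM_def s_def norm_mult norm_power exp_of_nat_mult[symmetric] power_mult_distrib
                    norm_of_nat mult_ac)
    also have "\<dots> \<le> B * s ^ n" using P s0 by (intro mult_right_mono) auto
    finally show "norm (norm (aM c q n) * exp (norm (wM n) * r)) \<le> B * s ^ n" by simp
  qed
  thus ?thesis by (subst summable_on_UNIV_nonneg_real_iff) auto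
qed

lemma M_exp:
  fixes c q t :: complex and r :: real
  assumes q: "norm q < 1" and s: "norm (c * q) * exp r < 1" and t: "norm t \<le> r"
  shows "infsum (\<lambda>n. aM c q n * exp (wM n * t)) UNIV = eval_fps (EF q) (c * q * exp t)"
proof -
  have "(\<lambda>n. aM c q n * exp (wM n * t)) sums infsum (\<lambda>n. aM c q n * exp (wM n * t)) UNIV"
    by (intro infsum_sums exp_summable[OF aM_summable[OF q s] t])
  moreover have "(\<lambda>n. aM c q n * exp (wM n * t)) = (\<lambda>n. fps_nth (EF q) n * (c * q * exp t) ^ n)"
    by (rule ext) (simp only: aM_def wM_def EF_def exp_of_nat_mult fps_nth_Abs_fps power_mult_distrib, simp add: mult_ac)
  ultimately show ?thesis unfolding eval_fps_def by (simp add: sums_iff)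
qed

lemma M_0:
  fixes c q :: complex and r :: real
  assumes q: "norm q < 1" and s: "norm (c * q) * exp r < 1" and r: "r \<ge> 0"
  shows "infsum (\<lambda>n. aM c q n * wM n ^ 0) UNIV = eval_fps (EF q) (c * q)"
  using M_exp[OF q s, of 0] r by simp

lemma M_m:
  fixes c q :: complex and r :: real
  assumes q: "norm q < 1" and s: "norm (c * q) * exp r < 1" and r: "r > 0" and m: "m \<ge> 1"
  shows "infsum (\<lambda>n. aM c q n * wM n ^ m) UNIV = Mc m c q"
proof -
  have "(\<lambda>n. aM c q n * wM n ^ m) sums infsum (\<lambda>n. aM c q n * wM n ^ m) UNIV"
    by (intro infsum_sums pw_summable[OF r aM_summable[OF q s]])
  hence "(\<lambda>n. aM c q (Suc n) * wM (Suc n) ^ m) sums infsum (\<lambda>n. aM c q n * wM n ^ m) UNIV"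
    using sums_Suc_iff[of "\<lambda>n. aM c q n * wM n ^ m"] m by (simp add: wM_def zero_power)
  moreover have "(\<lambda>n. aM c q (Suc n) * wM (Suc n) ^ m) =
      (\<lambda>n. of_nat (Suc n) ^ m * c ^ Suc n * q ^ Suc n * qpoch_inf (q ^ (Suc n + 1)) q)"
    by (auto simp: aM_def wM_def power_mult_distrib mult_ac simp del: of_nat_Suc power_Suc)
  ultimately show ?thesis unfolding Mc_def by (simp add: sums_iff)
qed



definition Tset :: "nat set \<Rightarrow> nat \<Rightarrow> (nat \<Rightarrow> nat) set" where
  "Tset S n = {l. (\<forall>i. i \<notin> S \<longrightarrow> l i = 0) \<and> (\<Sum>i\<in>S. i * l i) = n}"

lemma Tset_finite:
  assumes "finite S" "0 \<notin> S"
  shows "finite (Tset S n)"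
proof (rule finite_subset)
  show "Tset S n \<subseteq> {f. \<forall>x. (x \<in> S \<longrightarrow> f x \<in> {0..n}) \<and> (x \<notin> S \<longrightarrow> f x = 0)}"
  proof safe
    fix l x assume l: "l \<in> Tset S n" and x: "x \<in> S"
    have "l x \<le> x * l x" using x assms(2) by (cases x) auto
    also have "\<dots> \<le> (\<Sum>i\<in>S. i * l i)" using x assms(1) by (intro member_le_sum) auto
    finally show "l x \<in> {0..n}" using l by (auto simp: Tset_def)
  next
    fix l x assume "l \<in> Tset S n" "x \<notin> S" thus "l x = 0" by (auto simp: Tset_def)
  qed
  show "finite {f. \<forall>x. (x \<in> S \<longrightarrow> f x \<in> {0..n}) \<and> (x \<notin> S \<longrightarrow> f x = (0::nat))}"
    by (rule finite_set_of_finite_funs) (use assms in auto)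
qed

lemma Tset_empty: "Tset {} n = (if n = 0 then {\<lambda>_. 0} else {})"
  by (auto simp: Tset_def)

lemma prod_nth_weighted:
  fixes g :: "nat \<Rightarrow> nat \<Rightarrow> 'a :: comm_ring_1"
  assumes "finite S" "0 \<notin> S"
  shows "(\<Prod>i\<in>S. Abs_fps (\<lambda>k. if i dvd k then g i (k div i) else 0)) $ n
           = (\<Sum>l\<in>Tset S n. \<Prod>i\<in>S. g i (l i))"
  using assms
proof (induction S arbitrary: n rule: finite_induct)
  case empty
  thus ?case by (simp add: Tset_empty)
next
  case (insert a S n)
  define f where "f = (\<lambda>i. Abs_fps (\<lambda>k. if i dvd k then g i (k div i) else (0::'a)))"
  have a0: "a > 0" using insert.prems by (cases a) auto
  have S0: "0 \<notin> S" using insert.prems by auto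
  have IH: "(prod f S) $ k = (\<Sum>l\<in>Tset S k. \<Prod>i\<in>S. g i (l i))" for k
    unfolding f_def by (rule insert.IH[OF S0])
  have "(prod f (insert a S)) $ n = (f a * prod f S) $ n"
    using insert.hyps by simp
  also have "\<dots> = (\<Sum>j=0..n. f a $ j * (prod f S) $ (n - j))" by (rule fps_mult_nth)
  also have "\<dots> = (\<Sum>j\<in>{0..n}. if a dvd j then g a (j div a) * (prod f S) $ (n - j) else 0)"
    by (intro sum.cong) (auto simp: f_def)
  also have "\<dots> = (\<Sum>j\<in>{j\<in>{0..n}. a dvd j}. g a (j div a) * (prod f S) $ (n - j))"
    by (rule sum.inter_filter[symmetric]) simp
  also have "\<dots> = (\<Sum>p\<in>{0..n div a}. g a p * (prod f S) $ (n - a * p))"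
  proof (rule sum.reindex_bij_witness[where i = "\<lambda>p. a * p" and j = "\<lambda>j. j div a"])
    fix p assume "p \<in> {0..n div a}"
    hence "p * a \<le> n" using a0 by (simp add: less_eq_div_iff_mult_less_eq)
    thus "a * p \<in> {j \<in> {0..n}. a dvd j}" by (simp add: mult.commute)
  qed (use a0 in \<open>auto simp: less_eq_div_iff_mult_less_eq intro: div_le_mono\<close>)
  also have "\<dots> = (\<Sum>p\<in>{0..n div a}. \<Sum>l\<in>Tset S (n - a * p). g a p * (\<Prod>i\<in>S. g i (l i)))"
    by (simp add: IH sum_distrib_left)
  also have "\<dots> = (\<Sum>(p,l)\<in>Sigma {0..n div a} (\<lambda>p. Tset S (n - a * p)). g a p * (\<Prod>i\<in>S. g i (l i)))"
    by (rule sum.Sigma) (use Tset_finite[OF insert.hyps(1) S0] in auto)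
  also have "\<dots> = (\<Sum>L\<in>Tset (insert a S) n. \<Prod>i\<in>insert a S. g i (L i))"
  proof (rule sum.reindex_bij_witness[where i = "\<lambda>L. (L a, L(a := 0))" and j = "\<lambda>(p,l). l(a := p)"])
    fix x assume x: "x \<in> Sigma {0..n div a} (\<lambda>p. Tset S (n - a * p))"
    obtain p l where pl: "x = (p, l)" by (cases x)
    have p: "a * p \<le> n" using x a0 by (auto simp: pl less_eq_div_iff_mult_less_eq mult.commute)
    have l: "\<forall>i. i \<notin> S \<longrightarrow> l i = 0" "(\<Sum>i\<in>S. i * l i) = n - a * p" using x by (auto simp: pl Tset_def)
    have la: "l a = 0" using l insert.hyps by auto
    show "(\<lambda>L. (L a, L(a := 0))) ((\<lambda>(p,l). l(a := p)) x) = x"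
      using la by (auto simp: pl)
    have sS: "(\<Sum>i\<in>S. i * (l(a := p)) i) = (\<Sum>i\<in>S. i * l i)"
      using insert.hyps by (intro sum.cong) auto
    show "(\<lambda>(p,l). l(a := p)) x \<in> Tset (insert a S) n"
      using l p sS insert.hyps by (auto simp: pl Tset_def)
    have pS: "(\<Prod>i\<in>S. g i ((l(a := p)) i)) = (\<Prod>i\<in>S. g i (l i))"
      using insert.hyps by (intro prod.cong) auto
    show "(\<Prod>i\<in>insert a S. g i (((\<lambda>(p,l). l(a := p)) x) i)) = (case x of (p, l) \<Rightarrow> g a p * (\<Prod>i\<in>S. g i (l i)))"
      using insert.hyps pS by (simp add: pl)
  next
    fix L assume L: "L \<in> Tset (insert a S) n"
    have L0: "\<forall>i. i \<notin> insert a S \<longrightarrow> L i = 0" and Ls: "(\<Sum>i\<in>insert a S. i * L i) = n"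
      using L by (auto simp: Tset_def)
    have Ls': "a * L a + (\<Sum>i\<in>S. i * L i) = n" using Ls insert.hyps by simp
    show "(\<lambda>(p,l). l(a := p)) ((\<lambda>L. (L a, L(a := 0))) L) = L" by simp
    have sS: "(\<Sum>i\<in>S. i * (L(a := 0)) i) = (\<Sum>i\<in>S. i * L i)"
      using insert.hyps by (intro sum.cong) auto
    have "L a \<le> n div a" using Ls' a0 by (simp add: less_eq_div_iff_mult_less_eq mult.commute)
    moreover have "L(a := 0) \<in> Tset S (n - a * L a)"
      using L0 sS Ls' by (auto simp: Tset_def)
    ultimately show "(\<lambda>L. (L a, L(a := 0))) L \<in> Sigma {0..n div a} (\<lambda>p. Tset S (n - a * p))" by simp
  qed
  finally show ?case unfolding f_def .
qed


lemma fps_exp_unique: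
  fixes f g :: "complex \<Rightarrow> complex"
  assumes "f has_fps_expansion F" "g has_fps_expansion G" "eventually (\<lambda>x. f x = g x) (nhds 0)"
  shows "F = G"
proof (rule fps_ext)
  fix n
  have "F $ n = (deriv ^^ n) f 0 / fact n" by (rule fps_nth_fps_expansion[OF assms(1)])
  also have "(deriv ^^ n) f 0 = (deriv ^^ n) g 0" by (rule higher_deriv_cong_ev[OF assms(3)]) simp
  also have "\<dots> / fact n = G $ n" by (rule fps_nth_fps_expansion[OF assms(2), symmetric])
  finally show "F $ n = G $ n" .
qed

lemma sum_if_mult_eq:
  fixes X :: "nat \<Rightarrow> 'a :: comm_monoid_add"
  assumes "i > 0"
  shows "(\<Sum>j\<in>{0..k}. if k = i * j then X j else 0) = (if i dvd k then X (k div i) else 0)"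
proof (cases "i dvd k")
  case True
  then obtain p where p: "k = i * p" by (auto elim: dvdE)
  have "(\<Sum>j\<in>{0..k}. if k = i * j then X j else 0) = (\<Sum>j\<in>{0..k}. if j = p then X j else 0)"
    using assms by (intro sum.cong) (auto simp: p)
  also have "\<dots> = X p" using assms p by (simp add: sum.delta)
  finally show ?thesis using True assms by (simp add: p)
next
  case False
  thus ?thesis by (intro trans[OF sum.neutral]) auto
qed

lemma exp_mono_nth:
  fixes a :: complex assumes i: "i > 0"
  shows "fps_exp 1 oo (fps_const a * fps_X ^ i) = Abs_fps (\<lambda>k. if i dvd k then a ^ (k div i) / fact (k div i) else 0)"
proof (rule fps_ext)
  fix k
  have "(fps_exp 1 oo (fps_const a * fps_X ^ i)) $ k = (\<Sum>j\<in>{0..k}. (1 / fact j) * (if k = i * j then a ^ j else 0))"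
    unfolding fps_compose_nth by (intro sum.cong) (simp_all add: power_mult_distrib power_mult[symmetric])
  also have "\<dots> = (\<Sum>j\<in>{0..k}. if k = i * j then a ^ j / fact j else 0)"
    by (intro sum.cong) auto
  also have "\<dots> = (if i dvd k then a ^ (k div i) / fact (k div i) else 0)"
    by (rule sum_if_mult_eq[OF i])
  finally show "(fps_exp 1 oo (fps_const a * fps_X ^ i)) $ k = Abs_fps (\<lambda>k. if i dvd k then a ^ (k div i) / fact (k div i) else 0) $ k"
    by simp
qed

lemma exp_sum_compose:
  fixes c :: "nat \<Rightarrow> complex" and S :: "nat set"
  assumes S: "finite S" "0 \<notin> S"
  shows "fps_exp 1 oo (\<Sum>i\<in>S. fps_const (c i) * fps_X ^ i) = (\<Prod>i\<in>S. fps_exp 1 oo (fps_const (c i) * fps_X ^ i))"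
proof (rule fps_exp_unique)
  have h1: "(\<lambda>t. \<Sum>i\<in>S. c i * t ^ i) has_fps_expansion (\<Sum>i\<in>S. fps_const (c i) * fps_X ^ i)"
    by (intro has_fps_expansion_sum has_fps_expansion_cmult_left has_fps_expansion_fps_X_power)
  have z: "(\<Sum>i\<in>S. fps_const (c i) * fps_X ^ i) $ 0 = 0"
    using S by (auto simp: fps_sum_nth intro!: sum.neutral)
  show "(exp \<circ> (\<lambda>t. \<Sum>i\<in>S. c i * t ^ i)) has_fps_expansion (fps_exp 1 oo (\<Sum>i\<in>S. fps_const (c i) * fps_X ^ i))"
    by (rule has_fps_expansion_compose[OF has_fps_expansion_exp1 h1 z])
  show "(\<lambda>t. \<Prod>i\<in>S. (exp \<circ> (\<lambda>t. c i * t ^ i)) t) has_fps_expansion (\<Prod>i\<in>S. fps_exp 1 oo (fps_const (c i) * fps_X ^ i))"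
  proof (intro has_fps_expansion_prod)
    fix i assume i: "i \<in> S"
    have "(\<lambda>t. c i * t ^ i) has_fps_expansion fps_const (c i) * fps_X ^ i"
      by (intro has_fps_expansion_cmult_left has_fps_expansion_fps_X_power)
    moreover have "(fps_const (c i) * fps_X ^ i) $ 0 = 0" using i S by auto
    ultimately show "(exp \<circ> (\<lambda>t. c i * t ^ i)) has_fps_expansion (fps_exp 1 oo (fps_const (c i) * fps_X ^ i))"
      by (intro has_fps_expansion_compose[OF has_fps_expansion_exp1])
  qed
  show "\<forall>\<^sub>F x in nhds 0. (exp \<circ> (\<lambda>t. \<Sum>i\<in>S. c i * t ^ i)) x = (\<Prod>i\<in>S. (exp \<circ> (\<lambda>t. c i * t ^ i)) x)"
    using S by (intro always_eventually allI) (simp add: exp_sum)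
qed


lemma pow_trunc:
  fixes a b :: "'a :: comm_ring_1 fps"
  assumes "\<forall>k\<le>n. a $ k = b $ k"
  shows "(a ^ i) $ n = (b ^ i) $ n"
  using assms
proof (induction i arbitrary: n)
  case (Suc i n)
  have "(a ^ Suc i) $ n = (\<Sum>j=0..n. a $ j * (a ^ i) $ (n - j))" by (simp add: fps_mult_nth)
  also have "\<dots> = (\<Sum>j=0..n. b $ j * (b ^ i) $ (n - j))"
  proof (rule sum.cong)
    fix j assume j: "j \<in> {0..n}"
    have "(a ^ i) $ (n - j) = (b ^ i) $ (n - j)" using Suc.prems by (intro Suc.IH) auto
    thus "a $ j * (a ^ i) $ (n - j) = b $ j * (b ^ i) $ (n - j)" using Suc.prems j by auto
  qed simp
  also have "\<dots> = (b ^ Suc i) $ n" by (simp add: fps_mult_nth)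
  finally show ?case .
qed simp

lemma compose_trunc:
  fixes a b f :: "'a :: comm_ring_1 fps"
  assumes "\<forall>k\<le>n. a $ k = b $ k"
  shows "(f oo a) $ n = (f oo b) $ n"
  unfolding fps_compose_nth using pow_trunc[OF assms] by simp

lemma bell_tuples_Tset: "bell_tuples m = Tset {1..m} m"
  by (simp add: bell_tuples_def Tset_def)

lemma bell_coeff:
  fixes u :: "nat \<Rightarrow> complex"
  shows "(fps_exp 1 oo Abs_fps (\<lambda>i. if i = 0 then 0 else u i / fact i)) $ m = bellY m u / fact m"
proof -
  define Am where "Am = (\<Sum>i\<in>{1..m}. fps_const (u i / fact i) * fps_X ^ i)"
  have tr: "\<forall>k\<le>m. Abs_fps (\<lambda>i. if i = 0 then 0 else u i / fact i) $ k = Am $ k"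
  proof safe
    fix k assume "k \<le> m"
    have "Am $ k = (\<Sum>i\<in>{1..m}. if i = k then u i / fact i else 0)"
      unfolding Am_def fps_sum_nth by (intro sum.cong) auto
    also have "\<dots> = (if k \<in> {1..m} then u k / fact k else 0)" by (rule sum.delta) simp
    finally show "Abs_fps (\<lambda>i. if i = 0 then 0 else u i / fact i) $ k = Am $ k"
      using \<open>k \<le> m\<close> by auto
  qed
  have "(fps_exp 1 oo Abs_fps (\<lambda>i. if i = 0 then 0 else u i / fact i)) $ m = (fps_exp 1 oo Am) $ m"
    by (rule compose_trunc[OF tr])
  also have "fps_exp 1 oo Am = (\<Prod>i\<in>{1..m}. fps_exp 1 oo (fps_const (u i / fact i) * fps_X ^ i))"
    unfolding Am_def by (rule exp_sum_compose) auto
  also have "\<dots> = (\<Prod>i\<in>{1..m}. Abs_fps (\<lambda>k. if i dvd k then (\<lambda>i p. (u i / fact i) ^ p / fact p) i (k div i) else 0))"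
    by (intro prod.cong refl exp_mono_nth) auto
  also have "\<dots> $ m = (\<Sum>l\<in>Tset {1..m} m. \<Prod>i\<in>{1..m}. (u i / fact i) ^ l i / fact (l i))"
    by (subst prod_nth_weighted) auto
  also have "\<dots> = bellY m u / fact m"
    unfolding bellY_def bell_tuples_Tset sum_divide_distrib
  proof (rule sum.cong)
    fix l
    show "(\<Prod>i\<in>{1..m}. (u i / fact i) ^ l i / fact (l i)) =
          fact m / (\<Prod>i = 1..m. fact (l i)) * (\<Prod>i = 1..m. (u i / fact i) ^ l i) / fact m"
      by (simp add: prod_dividef)
  qed simp
  finally show ?thesis .
qed


theorem theorem2p2:
  fixes q c :: complex
  assumes "norm q < 1" and "norm (c * q) < 1"
  shows "((fps_const (qpoch_inf q q / qpoch_inf (c * q) q)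
           * (fps_exp 1 oo Abs_fps (\<lambda>m. if m = 0 then 0 else Kc m c q / fact m))
         = fps_const (qpoch_inf q q / qpoch_inf (c * q) q)
           + Abs_fps (\<lambda>m. if m = 0 then 0 else Mc m c q / fact m)))
         \<and> (\<forall>m\<ge>1. Mc m c q = qpoch_inf q q / qpoch_inf (c * q) q * bellY m (\<lambda>i. Kc i c q))"
proof -
  note q = assms(1) and cq = assms(2)
  define C where "C = qpoch_inf q q / qpoch_inf (c * q) q"
  define A where "A = Abs_fps (\<lambda>m. if m = 0 then 0 else Kc m c q / fact m)"
  define R where "R = fps_const C + Abs_fps (\<lambda>m. if m = 0 then 0 else Mc m c q / fact m)"
  define \<rho> where "\<rho> = norm (c * q)"
  define r where "r = ln (2 / (1 + \<rho>))"
  have \<rho>: "0 \<le> \<rho>" "\<rho> < 1" using cq by (auto simp: \<rho>_def)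
  have r: "r > 0" using \<rho> by (auto simp: r_def)
  have er: "exp r = 2 / (1 + \<rho>)" using \<rho> by (simp add: r_def)
  have s: "norm (c * q) * exp r < 1" using \<rho> by (simp add: er \<rho>_def[symmetric] field_simps)
  have cqnz: "qpoch_inf (c * q) q \<noteq> 0"
  proof (rule qp_nz[OF q])
    fix j
    have "norm (c * q * q ^ j) \<le> norm (c * q) * 1"
      unfolding norm_mult norm_power using q by (intro mult_left_mono power_le_one) auto
    thus "c * q * q ^ j \<noteq> 1" using cq by auto
  qed
  have EC: "eval_fps (EF q) (c * q) = C"
    using euler[OF q cq] cqnz by (simp add: C_def field_simps)
  have hG0: "(\<lambda>t. \<Sum>\<^sub>\<infinity>i. aG c q i * exp (wG i * t)) has_fps_expansion
               Abs_fps (\<lambda>m. (\<Sum>\<^sub>\<infinity>i. aG c q i * wG i ^ m) / fact m)"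
    by (rule exp_sum_fps[OF r aG_summable[OF q s]])
  have hG1: "Gf c q has_fps_expansion
      (Abs_fps (\<lambda>m. (\<Sum>\<^sub>\<infinity>i. aG c q i * wG i ^ m) / fact m) - fps_const (\<Sum>\<^sub>\<infinity>i. aG c q i))"
    using has_fps_expansion_diff[OF hG0 has_fps_expansion_const] unfolding Gf_def[abs_def] .
  have FA: "Abs_fps (\<lambda>m. (\<Sum>\<^sub>\<infinity>i. aG c q i * wG i ^ m) / fact m) - fps_const (\<Sum>\<^sub>\<infinity>i. aG c q i) = A"
  proof (rule fps_ext)
    fix m
    show "(Abs_fps (\<lambda>m. (\<Sum>\<^sub>\<infinity>i. aG c q i * wG i ^ m) / fact m) - fps_const (\<Sum>\<^sub>\<infinity>i. aG c q i)) $ m = A $ m"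
    proof (cases "m = 0")
      case False
      thus ?thesis using K_eq[OF q s r, of m] by (simp add: A_def)
    qed (simp add: A_def)
  qed
  have hG: "Gf c q has_fps_expansion A" using hG1 FA by simp
  have hL: "(\<lambda>t. C * (exp \<circ> Gf c q) t) has_fps_expansion fps_const C * (fps_exp 1 oo A)"
    by (intro has_fps_expansion_cmult_left has_fps_expansion_compose[OF has_fps_expansion_exp1 hG])
       (simp add: A_def)
  have hM0: "(\<lambda>t. \<Sum>\<^sub>\<infinity>n. aM c q n * exp (wM n * t)) has_fps_expansion
               Abs_fps (\<lambda>m. (\<Sum>\<^sub>\<infinity>n. aM c q n * wM n ^ m) / fact m)"
    by (rule exp_sum_fps[OF r aM_summable[OF q s]])
  have FR: "Abs_fps (\<lambda>m. (\<Sum>\<^sub>\<infinity>n. aM c q n * wM n ^ m) / fact m) = R"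
  proof (rule fps_ext)
    fix m
    show "Abs_fps (\<lambda>m. (\<Sum>\<^sub>\<infinity>n. aM c q n * wM n ^ m) / fact m) $ m = R $ m"
    proof (cases "m = 0")
      case True
      thus ?thesis using M_0[OF q s] r EC by (simp add: R_def)
    next
      case False
      thus ?thesis using M_m[OF q s r, of m] by (simp add: R_def)
    qed
  qed
  have hR: "(\<lambda>t. \<Sum>\<^sub>\<infinity>n. aM c q n * exp (wM n * t)) has_fps_expansion R"
    using hM0 FR by simp
  have ev: "eventually (\<lambda>t. C * (exp \<circ> Gf c q) t = (\<Sum>\<^sub>\<infinity>n. aM c q n * exp (wM n * t))) (nhds 0)"
  proof -
    have "eventually (\<lambda>t. t \<in> ball 0 r) (nhds (0::complex))"
      using r by (intro eventually_nhds_in_open) auto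
    thus ?thesis
    proof eventually_elim
      case (elim t)
      hence t: "norm t < r" by simp
      have x: "norm (c * q * exp t) < 1"
      proof -
        have "norm (exp t) \<le> exp r"
          using norm_exp[of t] t by (meson exp_le_cancel_iff less_imp_le order.trans)
        hence "norm (c * q) * norm (exp t) \<le> norm (c * q) * exp r" by (intro mult_left_mono) auto
        thus ?thesis using s by (simp add: norm_mult)
      qed
      have e1: "qpoch_inf (c * q * exp t) q * eval_fps (EF q) (c * q * exp t) = qpoch_inf q q"
        by (rule euler[OF q x])
      have e2: "qpoch_inf (c * q * exp t) q * exp (Gf c q t) = qpoch_inf (c * q) q"
        by (rule G_prod[OF q s t])
      have "eval_fps (EF q) (c * q * exp t) * qpoch_inf (c * q) q = qpoch_inf q q * exp (Gf c q t)"
        using e1 e2 by (metis mult.assoc mult.commute)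
      hence "eval_fps (EF q) (c * q * exp t) = C * exp (Gf c q t)"
        using cqnz by (simp add: C_def field_simps)
      thus ?case using M_exp[OF q s, of t] t by simp
    qed
  qed
  have main: "fps_const C * (fps_exp 1 oo A) = R"
    by (rule fps_exp_unique[OF hL hR ev])
  have bell: "Mc m c q = C * bellY m (\<lambda>i. Kc i c q)" if m: "m \<ge> 1" for m
  proof -
    have "(fps_const C * (fps_exp 1 oo A)) $ m = R $ m" using main by simp
    hence "C * (bellY m (\<lambda>i. Kc i c q) / fact m) = Mc m c q / fact m"
      using m bell_coeff[of "\<lambda>i. Kc i c q" m] by (simp add: A_def R_def)
    thus ?thesis by (simp add: field_simps)
  qed
  show ?thesis using main bell unfolding C_def A_def R_def by blast
qed

end
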